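(* Let $d\geq 3$ and $n\geq d+1$ be integers. Then $\mathcal{F}(C_d(n))$ is $2$-colorable. Moreover, $\tau(\mathcal{F}(C_d(n)))=\left\lceil\frac{n-d}{2}\right\rceil+1$ if $d$ is even, and $\tau(\mathcal{F}(C_d(n)))=2$ if $d$ is odd.
   Context: $C_d(n)$ is the cyclic $d$-polytope on $n$ vertices, the convex hull of $n$ distinct points on the moment curve $t\mapsto(t,t^2,\dots,t^d)$ in $\mathbb{R}^d$, with vertices labelled $1,\dots,n$ in increasing order of parameter. It is simplicial, and its facet hypergraph $\mathcal{F}(C_d(n))$ consists exactly of the $d$-subsets $f\subseteq[n]$ such that for all $i<j$ with $i,j\notin f$, the set $\{k\in f: i<k<j\}$ has even size (Gale's evenness criterion). $2$-colorable means the vertices can be $2$-colored with no monochromatic hyperedge; $\tau$ is the minimum size of a vertex set meeting every hyperedge. *)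

theory Defs
  imports Main
begin

text \<open>Facet hypergraph of the cyclic polytope C_d(n), vertices 1..n, via Gale's evenness criterion.\<close>
definition cyclic_facets :: "nat \<Rightarrow> nat \<Rightarrow> nat set set" where
  "cyclic_facets d n = {f. f \<subseteq> {1..n} \<and> card f = d \<and>
     (\<forall>i j. i \<in> {1..n} \<longrightarrow> j \<in> {1..n} \<longrightarrow> i < j \<longrightarrow> i \<notin> f \<longrightarrow> j \<notin> f \<longrightarrow>
        even (card {k \<in> f. i < k \<and> k < j}))}"

definition two_colorable :: "'a set \<Rightarrow> 'a set set \<Rightarrow> bool" where
  "two_colorable V E = (\<exists>c :: 'a \<Rightarrow> bool. \<forall>e \<in> E. \<exists>x\<in>e. \<exists>y\<in>e. c x \<noteq> c y)"

definition is_transversal :: "'a set \<Rightarrow> 'a set set \<Rightarrow> 'a set \<Rightarrow> bool" where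
  "is_transversal V E T = (T \<subseteq> V \<and> (\<forall>e \<in> E. e \<inter> T \<noteq> {}))"

definition tau :: "'a set \<Rightarrow> 'a set set \<Rightarrow> nat" where
  "tau V E = (LEAST k. \<exists>T. is_transversal V E T \<and> finite T \<and> card T = k)"

end

theory Submission
  imports Defs
begin

definition gale :: "nat \<Rightarrow> nat set \<Rightarrow> bool" where
  "gale n f = (\<forall>i j. i \<in> {1..n} \<longrightarrow> j \<in> {1..n} \<longrightarrow> i < j \<longrightarrow> i \<notin> f \<longrightarrow> j \<notin> f \<longrightarrow>
        even (card {k \<in> f. i < k \<and> k < j}))"

lemma facets_iff: "f \<in> cyclic_facets d n \<longleftrightarrow> f \<subseteq> {1..n} \<and> card f = d \<and> gale n f"
  unfolding cyclic_facets_def gale_def by blast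

lemma galeD: "gale n f \<Longrightarrow> 1 \<le> i \<Longrightarrow> j \<le> n \<Longrightarrow> i < j \<Longrightarrow> i \<notin> f \<Longrightarrow> j \<notin> f \<Longrightarrow>
   even (card {k \<in> f. i < k \<and> k < j})"
  unfolding gale_def by auto

lemma gale_mono:
  assumes "f \<subseteq> {1..a}" "gale (a+1) f" "a \<le> b"
  shows "gale (b+1) f"
  unfolding gale_def
proof (intro allI impI)
  fix i j assume ij: "i \<in> {1..b+1}" "j \<in> {1..b+1}" "i < j" "i \<notin> f" "j \<notin> f"
  show "even (card {k \<in> f. i < k \<and> k < j})"
  proof (cases "j \<le> a+1")
    case True thus ?thesis using galeD[OF assms(2)] ij by auto
  next
    case False
    show ?thesis
    proof (cases "i < a+1")
      case True
      have "{k \<in> f. i < k \<and> k < j} = {k \<in> f. i < k \<and> k < a+1}" using False assms(1) by auto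
      moreover have "a+1 \<notin> f" using assms(1) by auto
      ultimately show ?thesis using galeD[OF assms(2), of i "a+1"] ij True by auto
    next
      case False
      have "{k \<in> f. i < k \<and> k < j} = {}" using False assms(1) by auto
      thus ?thesis by (metis card.empty even_zero)
    qed
  qed
qed

lemma gale_addtop:
  assumes "f \<subseteq> {1..m}" "gale m f"
  shows "gale (Suc m) (insert (Suc m) f)"
  unfolding gale_def
proof (intro allI impI)
  fix i j assume ij: "i \<in> {1..Suc m}" "j \<in> {1..Suc m}" "i < j" "i \<notin> insert (Suc m) f" "j \<notin> insert (Suc m) f"
  have "{k \<in> insert (Suc m) f. i < k \<and> k < j} = {k \<in> f. i < k \<and> k < j}" using ij by auto
  thus "even (card {k \<in> insert (Suc m) f. i < k \<and> k < j})" using galeD[OF assms(2), of i j] ij by auto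
qed

lemma gale_addpair:
  assumes "f \<subseteq> {1..m}" "gale (m+1) f"
  shows "gale (m+3) (f \<union> {m+1, m+2})"
  unfolding gale_def
proof (intro allI impI)
  fix i j assume ij: "i \<in> {1..m+3}" "j \<in> {1..m+3}" "i < j" "i \<notin> f \<union> {m+1, m+2}" "j \<notin> f \<union> {m+1, m+2}"
  have fin: "finite f" using assms(1) finite_subset by blast
  show "even (card {k \<in> f \<union> {m+1, m+2}. i < k \<and> k < j})"
  proof (cases "j \<le> m")
    case True
    have "{k \<in> f \<union> {m+1, m+2}. i < k \<and> k < j} = {k \<in> f. i < k \<and> k < j}" using True by auto
    thus ?thesis using galeD[OF assms(2), of i j] ij True by auto
  next
    case False
    hence j: "j = m+3" using ij by auto
    have i: "i \<le> m" using ij j by auto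
    have "{k \<in> f \<union> {m+1, m+2}. i < k \<and> k < j} = {k \<in> f. i < k \<and> k < m+1} \<union> {m+1, m+2}"
      using j i assms(1) by auto
    moreover have "card ({k \<in> f. i < k \<and> k < m+1} \<union> {m+1, m+2}) = card {k \<in> f. i < k \<and> k < m+1} + 2"
      by (subst card_Un_disjoint) (auto simp: fin)
    moreover have "m+1 \<notin> f" using assms(1) by auto
    ultimately show ?thesis using galeD[OF assms(2), of i "m+1"] ij i by auto
  qed
qed

lemma gale_single: "gale n {1}"
  unfolding gale_def
proof (intro allI impI)
  fix i j assume "i \<in> {1..n}" "i \<notin> {1::nat}"
  hence "{k \<in> {1::nat}. i < k \<and> k < j} = {}" by auto
  thus "even (card {k \<in> {1::nat}. i < k \<and> k < j})" by (metis card.empty even_zero)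
qed

lemma gale_empty: "gale n {}"
  unfolding gale_def by simp

lemma gale_refl:
  assumes "f \<subseteq> {1..n}" "gale n f"
  shows "gale n ((\<lambda>k. n+1-k) ` f)"
  unfolding gale_def
proof (intro allI impI)
  let ?r = "\<lambda>k::nat. n+1-k"
  fix i j assume ij: "i \<in> {1..n}" "j \<in> {1..n}" "i < j" "i \<notin> ?r ` f" "j \<notin> ?r ` f"
  have inj: "inj_on ?r {1..n}" by (auto simp: inj_on_def)
  have ni: "n+1-i \<notin> f"
  proof
    assume "n+1-i \<in> f" hence "?r (n+1-i) \<in> ?r ` f" by blast
    moreover have "?r (n+1-i) = i" using ij(1) by auto
    ultimately show False using ij(4) by simp
  qed
  have nj: "n+1-j \<notin> f"
  proof
    assume "n+1-j \<in> f" hence "?r (n+1-j) \<in> ?r ` f" by blast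
    moreover have "?r (n+1-j) = j" using ij(2) by auto
    ultimately show False using ij(5) by simp
  qed
  have eq: "{k \<in> ?r ` f. i < k \<and> k < j} = ?r ` {k \<in> f. n+1-j < k \<and> k < n+1-i}"
  proof
    show "{k \<in> ?r ` f. i < k \<and> k < j} \<subseteq> ?r ` {k \<in> f. n+1-j < k \<and> k < n+1-i}"
    proof
      fix x assume "x \<in> {k \<in> ?r ` f. i < k \<and> k < j}"
      then obtain y where y: "y \<in> f" "x = n+1-y" "i < x" "x < j" by auto
      have "y \<in> {1..n}" using y assms(1) by auto
      thus "x \<in> ?r ` {k \<in> f. n+1-j < k \<and> k < n+1-i}" using y ij by (auto intro!: image_eqI[of _ _ y])
    qed
    show "?r ` {k \<in> f. n+1-j < k \<and> k < n+1-i} \<subseteq> {k \<in> ?r ` f. i < k \<and> k < j}"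
    proof
      fix x assume "x \<in> ?r ` {k \<in> f. n+1-j < k \<and> k < n+1-i}"
      then obtain y where y: "y \<in> f" "x = n+1-y" "n+1-j < y" "y < n+1-i" by auto
      have "y \<in> {1..n}" using y assms(1) by auto
      thus "x \<in> {k \<in> ?r ` f. i < k \<and> k < j}" using y ij by auto
    qed
  qed
  have "card {k \<in> ?r ` f. i < k \<and> k < j} = card {k \<in> f. n+1-j < k \<and> k < n+1-i}"
    unfolding eq by (rule card_image) (rule inj_on_subset[OF inj], use assms(1) in auto)
  moreover have "even (card {k \<in> f. n+1-j < k \<and> k < n+1-i})"
    using galeD[OF assms(2), of "n+1-j" "n+1-i"] ij ni nj by auto
  ultimately show "even (card {k \<in> ?r ` f. i < k \<and> k < j})" by simp
qed

lemma Qp: "T \<subseteq> {1..m} \<Longrightarrow> d + 2*card T \<le> m \<Longrightarrow> (even d \<or> 1 \<notin> T) \<Longrightarrow>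
  \<exists>f. f \<subseteq> {1..m} \<and> f \<inter> T = {} \<and> card f = d \<and> gale (m+1) f"
proof (induction m arbitrary: T d rule: less_induct)
  case (less m)
  have finT: "finite T" using less.prems(1) finite_subset by blast
  consider "d = 0" | "d = 1" | "d \<ge> 2 \<and> m \<notin> T \<and> m-1 \<notin> T" | "m \<in> T" | "m \<notin> T \<and> m-1 \<in> T"
    by linarith
  then show ?case
  proof cases
    case 1 thus ?thesis using gale_empty by (intro exI[of _ "{}"]) auto
  next
    case 2
    hence "1 \<notin> T" using less.prems(3) by auto
    moreover have "m \<ge> 1" using less.prems(2) 2 by auto
    ultimately show ?thesis using gale_single 2 by (intro exI[of _ "{1}"]) auto
  next
    case 3
    then obtain k where k: "m = k+2" using less.prems(2) by (metis add.commute le_Suc_ex le_add1 le_trans)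
    have T: "T \<subseteq> {1..k}"
    proof
      fix x assume "x \<in> T" thus "x \<in> {1..k}" using less.prems(1) 3 k by (auto simp: subset_iff) (metis atLeastAtMost_iff le_Suc_eq)
    qed
    obtain f where f: "f \<subseteq> {1..k}" "f \<inter> T = {}" "card f = d - 2" "gale (k+1) f"
    proof -
      have "d - 2 + 2 * card T \<le> k" using less.prems(2) 3 k by linarith
      moreover have "even (d-2) \<or> 1 \<notin> T" using less.prems(3) 3 by auto
      moreover have "k < m" using k by simp
      ultimately show ?thesis using less.IH[of k T "d-2"] T that by blast
    qed
    have fin: "finite f" using f(1) finite_subset by blast
    have "card (f \<union> {k+1, k+2}) = card f + 2"
      using f(1) fin by (subst card_Un_disjoint) auto
    moreover have "gale (k+3) (f \<union> {k+1, k+2})" using gale_addpair[OF f(1,4)] .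
    ultimately show ?thesis using f 3 k
      by (intro exI[of _ "f \<union> {k+1, k+2}"]) (auto simp: numeral_eq_Suc)
  next
    case 4
    have m1: "m \<ge> 1" using 4 less.prems(1) by auto
    have cT: "card (T - {m}) = card T - 1" using 4 finT by simp
    have cT1: "card T \<ge> 1" using 4 finT by (metis One_nat_def Suc_leI card_gt_0_iff empty_iff)
    have T: "T - {m} \<subseteq> {1..m-1}" using less.prems(1) by auto
    obtain f where f: "f \<subseteq> {1..m-1}" "f \<inter> (T - {m}) = {}" "card f = d" "gale (m-1+1) f"
    proof -
      have "d + 2 * card (T - {m}) \<le> m - 1" using less.prems(2) cT cT1 by linarith
      moreover have "even d \<or> 1 \<notin> T - {m}" using less.prems(3) by auto
      moreover have "m - 1 < m" using m1 by simp
      ultimately show ?thesis using less.IH[of "m-1" "T - {m}" d] T that by blast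
    qed
    have "gale (m+1) f" using gale_mono[OF f(1,4), of m] by simp
    moreover have "f \<subseteq> {1..m}" using f(1) by (meson atLeastatMost_subset_iff diff_le_self order_refl subset_trans)
    moreover have "m \<notin> f" using f(1) m1 by (auto simp: subset_iff)
    moreover have "f \<inter> T = {}" using f(2) \<open>m \<notin> f\<close> by auto
    ultimately show ?thesis using f(3) by blast
  next
    case 5
    have m2: "m \<ge> 2" using 5 less.prems(1) by (cases m) auto
    have cT: "card (T - {m-1}) = card T - 1" using 5 finT by simp
    have cT1: "card T \<ge> 1" using 5 finT by (metis One_nat_def Suc_leI card_gt_0_iff empty_iff)
    have T: "T - {m-1} \<subseteq> {1..m-2}"
    proof
      fix x assume x: "x \<in> T - {m-1}"
      hence "x \<in> {1..m}" "x \<noteq> m" "x \<noteq> m-1" using less.prems(1) 5 by auto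
      thus "x \<in> {1..m-2}" by auto
    qed
    obtain f where f: "f \<subseteq> {1..m-2}" "f \<inter> (T - {m-1}) = {}" "card f = d" "gale (m-2+1) f"
    proof -
      have "d + 2 * card (T - {m-1}) \<le> m - 2" using less.prems(2) cT cT1 by linarith
      moreover have "even d \<or> 1 \<notin> T - {m-1}" using less.prems(3) by auto
      moreover have "m - 2 < m" using m2 by simp
      ultimately show ?thesis using less.IH[of "m-2" "T - {m-1}" d] T that by blast
    qed
    have "gale (m+1) f" using gale_mono[OF f(1,4), of "m"] by simp
    moreover have "f \<subseteq> {1..m}" using f(1) by (meson atLeastatMost_subset_iff diff_le_self order_refl subset_trans)
    moreover have "m-1 \<notin> f" using f(1) m2 by (auto simp: subset_iff)
    moreover have "f \<inter> T = {}" using f(2) \<open>m-1 \<notin> f\<close> by auto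
    ultimately show ?thesis using f(3) by blast
  qed
qed

lemma Qc:
  assumes "T \<subseteq> {1..n}" "n \<in> T" "d + 2*card T \<le> n+1" "even d \<or> 1 \<notin> T"
  shows "\<exists>f. f \<subseteq> {1..n} \<and> f \<inter> T = {} \<and> card f = d \<and> gale n f"
proof -
  have n1: "n \<ge> 1" using assms(1,2) by auto
  have finT: "finite T" using assms(1) finite_subset by blast
  have cT: "card (T - {n}) = card T - 1" using assms(2) finT by simp
  have cT1: "card T \<ge> 1" using assms(2) finT by (metis One_nat_def Suc_leI card_gt_0_iff empty_iff)
  have T: "T - {n} \<subseteq> {1..n-1}"
  proof
    fix x assume x: "x \<in> T - {n}"
    hence "x \<in> {1..n}" "x \<noteq> n" using assms(1) by auto
    thus "x \<in> {1..n-1}" by auto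
  qed
  have "d + 2 * card (T - {n}) \<le> n - 1" using assms(3) cT cT1 by linarith
  moreover have "even d \<or> 1 \<notin> T - {n}" using assms(4) by auto
  ultimately obtain f where f: "f \<subseteq> {1..n-1}" "f \<inter> (T - {n}) = {}" "card f = d" "gale (n-1+1) f"
    using Qp[OF T] by blast
  have "gale n f" using f(4) n1 by simp
  moreover have "f \<subseteq> {1..n}" using f(1) by (meson atLeastatMost_subset_iff diff_le_self order_refl subset_trans)
  moreover have "n \<notin> f" using f(1) n1 by (auto simp: subset_iff)
  moreover have "f \<inter> T = {}" using f(2) \<open>n \<notin> f\<close> by auto
  ultimately show ?thesis using f(3) by blast
qed

lemma Qr:
  assumes "T \<subseteq> {1..n}" "1 \<in> T" "d + 2*card T \<le> n+1" "even d \<or> n \<notin> T"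
  shows "\<exists>f. f \<subseteq> {1..n} \<and> f \<inter> T = {} \<and> card f = d \<and> gale n f"
proof -
  define r where "r = (\<lambda>k::nat. n+1-k)"
  have n1: "n \<ge> 1" using assms(1,2) by auto
  have inj: "inj_on r {1..n}" by (auto simp: inj_on_def r_def)
  have rr: "\<And>x. x \<in> {1..n} \<Longrightarrow> r (r x) = x" by (auto simp: r_def)
  have rin: "\<And>x. x \<in> {1..n} \<Longrightarrow> r x \<in> {1..n}" by (auto simp: r_def)
  define T' where "T' = r ` T"
  have T': "T' \<subseteq> {1..n}" using rin assms(1) by (auto simp: T'_def)
  have cT': "card T' = card T" unfolding T'_def by (rule card_image, rule inj_on_subset[OF inj assms(1)])
  have nT': "n \<in> T'" unfolding T'_def using assms(2) by (auto simp: r_def intro!: image_eqI[of _ _ 1])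
  have oT': "even d \<or> 1 \<notin> T'"
  proof (cases "even d")
    case False
    hence "n \<notin> T" using assms(4) by auto
    show ?thesis
    proof (rule disjI2, rule notI)
      assume "1 \<in> T'"
      then obtain y where "y \<in> T" "1 = r y" unfolding T'_def by auto
      moreover hence "y \<in> {1..n}" using assms(1) by auto
      ultimately have "y = n" by (auto simp: r_def)
      thus False using \<open>n \<notin> T\<close> \<open>y \<in> T\<close> by simp
    qed
  qed simp
  obtain f where f: "f \<subseteq> {1..n}" "f \<inter> T' = {}" "card f = d" "gale n f"
    using Qc[OF T' nT' _ oT'] assms(3) cT' by auto
  have "gale n (r ` f)" using gale_refl[OF f(1,4)] by (simp add: r_def)
  moreover have "r ` f \<subseteq> {1..n}" using f(1) rin by auto
  moreover have "card (r ` f) = d" using f(3) card_image[OF inj_on_subset[OF inj f(1)]] by simp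
  moreover have "r ` f \<inter> T = {}"
  proof (rule ccontr)
    assume "r ` f \<inter> T \<noteq> {}"
    then obtain y where y: "y \<in> f" "r y \<in> T" by auto
    have "r (r y) \<in> T'" using y(2) unfolding T'_def by blast
    moreover have "r (r y) = y" using rr y(1) f(1) by auto
    ultimately show False using y(1) f(2) by auto
  qed
  ultimately show ?thesis by blast
qed

lemma Q:
  "T \<subseteq> {1..n} \<Longrightarrow> d \<le> n \<Longrightarrow> d + 2*card T \<le> n+1 \<Longrightarrow> (even d \<or> 1 \<notin> T \<or> n \<notin> T) \<Longrightarrow>
   \<exists>f. f \<subseteq> {1..n} \<and> f \<inter> T = {} \<and> card f = d \<and> gale n f"
proof (induction n arbitrary: T d)
  case 0
  thus ?case using gale_empty by (intro exI[of _ "{}"]) auto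
next
  case (Suc n)
  consider "d = 0" | "Suc n \<in> T \<and> (even d \<or> 1 \<notin> T)" | "1 \<in> T \<and> (even d \<or> Suc n \<notin> T)"
    | "d \<ge> 1 \<and> Suc n \<notin> T \<and> 1 \<notin> T"
    using Suc.prems(4) by force
  then show ?case
  proof cases
    case 1 thus ?thesis using gale_empty by (intro exI[of _ "{}"]) auto
  next
    case 2 thus ?thesis using Qc[OF Suc.prems(1) _ Suc.prems(3)] by blast
  next
    case 3 thus ?thesis using Qr[OF Suc.prems(1) _ Suc.prems(3)] by blast
  next
    case 4
    have T: "T \<subseteq> {1..n}"
    proof
      fix x assume x: "x \<in> T"
      hence "x \<in> {1..Suc n}" "x \<noteq> Suc n" using Suc.prems(1) 4 by auto
      thus "x \<in> {1..n}" by auto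
    qed
    obtain f where f: "f \<subseteq> {1..n}" "f \<inter> T = {}" "card f = d - 1" "gale n f"
    proof -
      have "d - 1 \<le> n" "d - 1 + 2 * card T \<le> n + 1" using Suc.prems(2,3) 4 by auto
      moreover have "even (d-1) \<or> 1 \<notin> T \<or> n \<notin> T" using 4 by auto
      ultimately show ?thesis using Suc.IH[OF T] that by blast
    qed
    have fin: "finite f" using f(1) finite_subset by blast
    have "Suc n \<notin> f" using f(1) by auto
    hence "card (insert (Suc n) f) = d" using f(3) 4 fin by simp
    moreover have "gale (Suc n) (insert (Suc n) f)" using gale_addtop[OF f(1,4)] .
    moreover have "insert (Suc n) f \<subseteq> {1..Suc n}" using f(1) by (auto simp: subset_iff)
    moreover have "insert (Suc n) f \<inter> T = {}" using f(2) 4 by auto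
    ultimately show ?thesis by blast
  qed
qed

lemma tau_eq:
  assumes "is_transversal V E T0" "finite T0" "card T0 = v"
    "\<And>T. is_transversal V E T \<Longrightarrow> finite T \<Longrightarrow> card T \<ge> v"
  shows "tau V E = v"
  unfolding tau_def
proof (rule Least_equality)
  show "\<exists>T. is_transversal V E T \<and> finite T \<and> card T = v" using assms by blast
next
  fix y assume "\<exists>T. is_transversal V E T \<and> finite T \<and> card T = y"
  thus "v \<le> y" using assms(4) by blast
qed

lemma colorable:
  assumes "d \<ge> 3"
  shows "two_colorable {1..n} (cyclic_facets d n)"
  unfolding two_colorable_def
proof (intro exI[of _ "\<lambda>x::nat. even x"] ballI)
  fix f assume "f \<in> cyclic_facets d n"
  hence f: "f \<subseteq> {1..n}" "card f = d" "gale n f" by (auto simp: facets_iff)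
  have fin: "finite f" using f(1) finite_subset by blast
  have "card (f - {1, n}) \<ge> card f - card {1,n}" by (rule diff_card_le_card_Diff) simp
  moreover have "card {1::nat, n} \<le> 2" by (simp add: card_insert_le_m1)
  ultimately have "card (f - {1, n}) \<ge> 1" using f(2) assms by linarith
  then obtain k where k: "k \<in> f" "k \<noteq> 1" "k \<noteq> n"
    by (metis DiffE One_nat_def card.empty ex_in_conv insertCI not_one_le_zero)
  have "k \<in> {1..n}" using k(1) f(1) by blast
  hence kr: "2 \<le> k" "k + 1 \<le> n" using k(2,3) by auto
  show "\<exists>x\<in>f. \<exists>y\<in>f. even x \<noteq> even y"
  proof (rule ccontr)
    assume nc: "\<not> ?thesis"
    have a: "k - 1 \<notin> f"
    proof
      assume "k - 1 \<in> f" thus False using nc k(1) kr by (metis One_nat_def Suc_pred even_Suc le_less_trans less_2_cases_iff linorder_not_le not_less_zero zero_less_Suc)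
    qed
    have b: "k + 1 \<notin> f"
    proof
      assume "k + 1 \<in> f" thus False using nc k(1) by (metis even_Suc Suc_eq_plus1)
    qed
    have "{x \<in> f. k - 1 < x \<and> x < k + 1} = {k}" using k(1) kr by auto
    moreover have "even (card {x \<in> f. k - 1 < x \<and> x < k + 1})"
      using galeD[OF f(3), of "k-1" "k+1"] a b kr by auto
    ultimately show False by simp
  qed
qed

lemma odd_upper:
  assumes "odd d" "n \<ge> 2"
  shows "is_transversal {1..n} (cyclic_facets d n) {1, n}"
  unfolding is_transversal_def
proof (intro conjI ballI)
  show "{1, n} \<subseteq> {1..n}" using assms by auto
  fix f assume "f \<in> cyclic_facets d n"
  hence f: "f \<subseteq> {1..n}" "card f = d" "gale n f" by (auto simp: facets_iff)
  show "f \<inter> {1, n} \<noteq> {}"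
  proof
    assume e: "f \<inter> {1, n} = {}"
    have "{k \<in> f. 1 < k \<and> k < n} = f"
    proof (intro equalityI subsetI)
      fix x assume "x \<in> f"
      moreover hence "x \<in> {1..n}" "x \<noteq> 1" "x \<noteq> n" using e f(1) by auto
      ultimately show "x \<in> {k \<in> f. 1 < k \<and> k < n}" by auto
    qed auto
    moreover have "even (card {k \<in> f. 1 < k \<and> k < n})" using galeD[OF f(3), of 1 n] e assms by auto
    ultimately show False using f(2) assms(1) by simp
  qed
qed

lemma lower:
  assumes "T \<subseteq> {1..n}" "d \<le> n" "d + 2*card T \<le> n+1" "even d \<or> 1 \<notin> T \<or> n \<notin> T"
  shows "\<not> is_transversal {1..n} (cyclic_facets d n) T"
proof
  assume tr: "is_transversal {1..n} (cyclic_facets d n) T"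
  obtain f where f: "f \<subseteq> {1..n}" "f \<inter> T = {}" "card f = d" "gale n f" using Q[OF assms] by blast
  hence "f \<in> cyclic_facets d n" by (simp add: facets_iff)
  thus False using tr f(2) unfolding is_transversal_def by blast
qed

lemma even_upper:
  assumes "even d" "d \<ge> 3" "n \<ge> d + 1"
  defines "T0 \<equiv> insert 1 ((\<lambda>i. d+1+2*i) ` {..<(n-d+1) div 2})"
  shows "is_transversal {1..n} (cyclic_facets d n) T0 \<and> finite T0 \<and> card T0 = (n-d+1) div 2 + 1"
proof -
  let ?h = "(n-d+1) div 2"
  let ?g = "\<lambda>i::nat. d+1+2*i"
  have h1: "?h \<ge> 1" using assms(3) by auto
  have inj: "inj_on ?g {..<?h}" by (auto simp: inj_on_def)
  have n1: "1 \<notin> ?g ` {..<?h}" using assms(2) by auto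
  have card: "card T0 = ?h + 1" unfolding T0_def using n1 card_image[OF inj] by simp
  have sub: "T0 \<subseteq> {1..n}"
  proof
    fix x assume "x \<in> T0"
    then consider "x = 1" | i where "i < ?h" "x = ?g i" unfolding T0_def by auto
    thus "x \<in> {1..n}"
    proof cases
      case 1 thus ?thesis using assms(3) by auto
    next
      case 2
      hence "2*i + 2 \<le> n - d + 1" by linarith
      thus ?thesis using 2 assms(3) by auto
    qed
  qed
  have memT: "\<And>k. d+1 \<le> k \<Longrightarrow> k \<le> n \<Longrightarrow> even (k-d-1) \<Longrightarrow> k \<in> T0"
  proof -
    fix k assume k: "d+1 \<le> k" "k \<le> n" "even (k-d-1)"
    define i where "i = (k-d-1) div 2"
    have ki: "k = ?g i" using k unfolding i_def by (auto elim!: evenE)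
    have "i < ?h" using k unfolding i_def by (auto elim!: evenE)
    thus "k \<in> T0" unfolding T0_def using ki by blast
  qed
  have tr: "is_transversal {1..n} (cyclic_facets d n) T0"
    unfolding is_transversal_def
  proof (intro conjI ballI sub)
    fix f assume "f \<in> cyclic_facets d n"
    hence f: "f \<subseteq> {1..n}" "card f = d" "gale n f" by (auto simp: facets_iff)
    show "f \<inter> T0 \<noteq> {}"
    proof
      assume e: "f \<inter> T0 = {}"
      have d1: "d+1 \<in> T0" using memT[of "d+1"] assms(3) by simp
      have one: "1 \<in> T0" unfolding T0_def by simp
      have fs: "f \<subseteq> {2..d} \<union> {n}"
      proof
        fix k assume kf: "k \<in> f"
        have kn: "k \<in> {1..n}" "k \<notin> T0" using kf f(1) e by auto
        hence "k \<noteq> 1" "k \<noteq> d+1" using d1 one by auto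
        show "k \<in> {2..d} \<union> {n}"
        proof (rule ccontr)
          assume "k \<notin> {2..d} \<union> {n}"
          hence kr: "d+2 \<le> k" "k < n" using kn \<open>k \<noteq> 1\<close> \<open>k \<noteq> d+1\<close> by auto
          have "odd (k-d-1)" using memT[of k] kr kn by auto
          hence "even (k-1-d-1)" "even (k+1-d-1)" using kr by (auto elim!: oddE)
          hence "k-1 \<in> T0" "k+1 \<in> T0" using memT[of "k-1"] memT[of "k+1"] kr by auto
          hence a: "k-1 \<notin> f" "k+1 \<notin> f" using e by auto
          have "{x \<in> f. k - 1 < x \<and> x < k + 1} = {k}" using kf kr by auto
          moreover have "even (card {x \<in> f. k - 1 < x \<and> x < k + 1})"
            using galeD[OF f(3), of "k-1" "k+1"] a kr by auto
          ultimately show False by simp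
        qed
      qed
      have cs: "card ({2..d} \<union> {n}) = d" using assms(2,3) by simp
      have feq: "f = {2..d} \<union> {n}" using card_subset_eq[OF _ fs] cs f(2) by simp
      have "{x \<in> f. 1 < x \<and> x < d+1} = {2..d}" unfolding feq using assms(3) by auto
      moreover have "even (card {x \<in> f. 1 < x \<and> x < d+1})"
      proof -
        have "1 \<notin> f" "d+1 \<notin> f" using e d1 one by auto
        thus ?thesis using galeD[OF f(3), of 1 "d+1"] assms(2,3) by auto
      qed
      ultimately show False using assms(1,2) by simp
    qed
  qed
  show ?thesis using tr card sub finite_subset by blast
qed

theorem proposition3p4:
  fixes d n :: nat
  assumes "d \<ge> 3" and "n \<ge> d + 1"
  shows "two_colorable {1..n} (cyclic_facets d n)
    \<and> (even d \<longrightarrow> tau {1..n} (cyclic_facets d n) = (n - d + 1) div 2 + 1)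
    \<and> (odd d \<longrightarrow> tau {1..n} (cyclic_facets d n) = 2)"
proof (intro conjI impI)
  show "two_colorable {1..n} (cyclic_facets d n)" using colorable assms(1) by blast
next
  assume ev: "even d"
  obtain T0 where T0: "is_transversal {1..n} (cyclic_facets d n) T0" "finite T0" "card T0 = (n-d+1) div 2 + 1"
    using even_upper[OF ev assms] by blast
  show "tau {1..n} (cyclic_facets d n) = (n - d + 1) div 2 + 1"
  proof (rule tau_eq[OF T0])
    fix T assume T: "is_transversal {1..n} (cyclic_facets d n) T" "finite T"
    show "card T \<ge> (n - d + 1) div 2 + 1"
    proof (rule ccontr)
      assume "\<not> ?thesis"
      hence "d + 2 * card T \<le> n + 1" using assms by linarith
      moreover have "T \<subseteq> {1..n}" using T(1) unfolding is_transversal_def by blast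
      ultimately show False using lower[of T n d] T(1) ev assms by auto
    qed
  qed
next
  assume od: "odd d"
  have n2: "n \<ge> 2" using assms by auto
  show "tau {1..n} (cyclic_facets d n) = 2"
  proof (rule tau_eq[OF odd_upper[OF od n2]])
    show "card {1, n} = 2" using n2 by simp
    fix T assume T: "is_transversal {1..n} (cyclic_facets d n) T" "finite T"
    show "card T \<ge> 2"
    proof (rule ccontr)
      assume "\<not> ?thesis"
      hence c: "card T \<le> 1" by simp
      have "1 \<notin> T \<or> n \<notin> T"
      proof (rule ccontr)
        assume "\<not> ?thesis"
        hence "{1, n} \<subseteq> T" by auto
        hence "card {1, n} \<le> card T" using T(2) card_mono by blast
        thus False using c n2 by simp
      qed
      moreover have "d + 2 * card T \<le> n + 1" using assms c by linarith
      moreover have "T \<subseteq> {1..n}" using T(1) unfolding is_transversal_def by blast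
      ultimately show False using lower[of T n d] T(1) assms by auto
    qed
  qed simp
qed

end
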